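(* Let $G$ be a simple algebraic group over an uncountable algebraically closed field, let $C_1,\dots,C_e$ be noncentral conjugacy classes of $G$ and $\Omega=C_1\times\dots\times C_e$. If there is a tuple $(x_1,\dots,x_e)\in\Omega$ such that $\langle x_1,\dots,x_e\rangle$ is Zariski dense in $G$, then generic tuples in $\Omega$ generate a Zariski dense subgroup of $G$; that is, the set of tuples in $\Omega$ generating a Zariski dense subgroup contains the complement in $\Omega$ of a countable union of proper closed subvarieties of $\Omega$.
   Context: $\Omega$ is an irreducible variety. *)

theory Defs
  imports "HOL-Analysis.Analysis" "HOL-Computational_Algebra.Polynomial"
begin

inductive_set polyfun :: "(('c \<Rightarrow> 'k::comm_ring_1) \<Rightarrow> 'k) set" where
  pf_const: "(\<lambda>_. a) \<in> polyfun"
| pf_var: "(\<lambda>x. x v) \<in> polyfun"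
| pf_add: "p \<in> polyfun \<Longrightarrow> q \<in> polyfun \<Longrightarrow> (\<lambda>x. p x + q x) \<in> polyfun"
| pf_mult: "p \<in> polyfun \<Longrightarrow> q \<in> polyfun \<Longrightarrow> (\<lambda>x. p x * q x) \<in> polyfun"

definition zariski_closed :: "('c \<Rightarrow> 'k::comm_ring_1) set \<Rightarrow> bool" where
  "zariski_closed S \<longleftrightarrow> (\<exists>P \<subseteq> polyfun. S = {x. \<forall>p\<in>P. p x = 0})"

text \<open>Relatively Zariski closed subsets Z of a set Y, where points of Y are given
  affine coordinates by the map phi.\<close>
definition zclosed_in :: "('a \<Rightarrow> ('c \<Rightarrow> 'k::comm_ring_1)) \<Rightarrow> 'a set \<Rightarrow> 'a set \<Rightarrow> bool" where
  "zclosed_in phi Y Z \<longleftrightarrow> Z \<subseteq> Y \<and> (\<exists>S. zariski_closed S \<and> Z = {y\<in>Y. phi y \<in> S})"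

definition zirreducible :: "('a \<Rightarrow> ('c \<Rightarrow> 'k::comm_ring_1)) \<Rightarrow> 'a set \<Rightarrow> bool" where
  "zirreducible phi Y \<longleftrightarrow> Y \<noteq> {} \<and>
     (\<forall>Z1 Z2. zclosed_in phi Y Z1 \<and> zclosed_in phi Y Z2 \<and> Y = Z1 \<union> Z2 \<longrightarrow> Z1 = Y \<or> Z2 = Y)"

definition zdense_in :: "('a \<Rightarrow> ('c \<Rightarrow> 'k::comm_ring_1)) \<Rightarrow> 'a set \<Rightarrow> 'a set \<Rightarrow> bool" where
  "zdense_in phi Y Z \<longleftrightarrow> Z \<subseteq> Y \<and> (\<forall>W. zclosed_in phi Y W \<and> Z \<subseteq> W \<longrightarrow> W = Y)"

definition mat_coords :: "'k^'n^'n \<Rightarrow> ('n \<times> 'n \<Rightarrow> 'k)" where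
  "mat_coords A = (\<lambda>(i,j). A $ i $ j)"

definition tup_coords :: "('e \<Rightarrow> 'k^'n^'n) \<Rightarrow> ('e \<times> 'n \<times> 'n \<Rightarrow> 'k)" where
  "tup_coords x = (\<lambda>(e,i,j). x e $ i $ j)"

definition GLn :: "('k::field^'n^'n) set" where
  "GLn = {A. invertible A}"

definition mat_subgroup :: "('k::field^'n^'n) set \<Rightarrow> bool" where
  "mat_subgroup H \<longleftrightarrow> H \<subseteq> GLn \<and> mat 1 \<in> H \<and>
     (\<forall>A\<in>H. \<forall>B\<in>H. A ** B \<in> H) \<and> (\<forall>A\<in>H. matrix_inv A \<in> H)"

definition algebraic_group :: "('k::field^'n^'n) set \<Rightarrow> bool" where
  "algebraic_group G \<longleftrightarrow> mat_subgroup G \<and> zclosed_in mat_coords GLn G"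

definition normal_in :: "('k::field^'n^'n) set \<Rightarrow> ('k^'n^'n) set \<Rightarrow> bool" where
  "normal_in N G \<longleftrightarrow> (\<forall>g\<in>G. \<forall>x\<in>N. g ** x ** matrix_inv g \<in> N)"

text \<open>Simple algebraic group: connected, non-commutative, and without nontrivial proper
  closed connected normal subgroups.\<close>
definition simple_algebraic_group :: "('k::field^'n^'n) set \<Rightarrow> bool" where
  "simple_algebraic_group G \<longleftrightarrow> algebraic_group G \<and> zirreducible mat_coords G \<and>
     (\<exists>A\<in>G. \<exists>B\<in>G. A ** B \<noteq> B ** A) \<and>
     (\<forall>N. mat_subgroup N \<and> N \<subseteq> G \<and> zclosed_in mat_coords G N \<and> zirreducible mat_coords N
          \<and> normal_in N G \<longrightarrow> N = {mat 1} \<or> N = G)"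

definition conj_class :: "('k::field^'n^'n) set \<Rightarrow> 'k^'n^'n \<Rightarrow> ('k^'n^'n) set" where
  "conj_class G x = {g ** x ** matrix_inv g | g. g \<in> G}"

definition central_in :: "('k::field^'n^'n) set \<Rightarrow> 'k^'n^'n \<Rightarrow> bool" where
  "central_in G x \<longleftrightarrow> (\<forall>g\<in>G. g ** x = x ** g)"

inductive_set gen_subgroup :: "('k::field^'n^'n) set \<Rightarrow> ('k^'n^'n) set" for S where
  gs_one: "mat 1 \<in> gen_subgroup S"
| gs_gen: "s \<in> S \<Longrightarrow> s \<in> gen_subgroup S"
| gs_mult: "a \<in> gen_subgroup S \<Longrightarrow> b \<in> gen_subgroup S \<Longrightarrow> a ** b \<in> gen_subgroup S"
| gs_inv: "a \<in> gen_subgroup S \<Longrightarrow> matrix_inv a \<in> gen_subgroup S"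

definition alg_closed_field :: "'k::field itself \<Rightarrow> bool" where
  "alg_closed_field _ \<longleftrightarrow> (\<forall>p::'k poly. degree p > 0 \<longrightarrow> (\<exists>z. poly p z = 0))"

end

theory Submission
  imports Defs "Jordan_Normal_Form.Determinant"
begin

lemma JL1:
  fixes f :: "nat \<times> nat \<Rightarrow> 'k::field"
  shows "Determinant.det (Matrix.mat n n f) \<noteq> 0 \<longleftrightarrow>
    (\<forall>v. (\<forall>i<n. (\<Sum>j<n. f (i,j) * v j) = 0) \<longrightarrow> (\<forall>j<n. v j = 0))"
proof -
  have A: "Matrix.mat n n f \<in> carrier_mat n n" by simp
  note D = det_0_iff_vec_prod_zero_field[OF A]
  show ?thesis
  proof
    assume "Determinant.det (Matrix.mat n n f) \<noteq> 0"
    with D have nz: "\<And>v. v \<in> carrier_vec n \<Longrightarrow> Matrix.mat n n f *\<^sub>v v = 0\<^sub>v n \<Longrightarrow> v = 0\<^sub>v n" by blast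
    show "\<forall>v. (\<forall>i<n. (\<Sum>j<n. f (i,j) * v j) = 0) \<longrightarrow> (\<forall>j<n. v j = 0)"
    proof (intro allI impI)
      fix v j assume h: "\<forall>i<n. (\<Sum>j<n. f (i,j) * v j) = 0" and j: "j < n"
      have "Matrix.mat n n f *\<^sub>v Matrix.vec n v = 0\<^sub>v n"
        using h by (auto simp: mult_mat_vec_def scalar_prod_def row_def atLeast0LessThan)
      then have "Matrix.vec n v = 0\<^sub>v n" using nz by simp
      then show "v j = 0" using j by (metis index_vec index_zero_vec(1))
    qed
  next
    assume h: "\<forall>v. (\<forall>i<n. (\<Sum>j<n. f (i,j) * v j) = 0) \<longrightarrow> (\<forall>j<n. v j = 0)"
    show "Determinant.det (Matrix.mat n n f) \<noteq> 0"
    proof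
      assume "Determinant.det (Matrix.mat n n f) = 0"
      with D obtain v where v: "v \<in> carrier_vec n" "v \<noteq> 0\<^sub>v n" "Matrix.mat n n f *\<^sub>v v = 0\<^sub>v n" by blast
      have "\<forall>i<n. (\<Sum>j<n. f (i,j) * (v $ j)) = 0"
      proof (intro allI impI)
        fix i assume i: "i < n"
        have "(Matrix.mat n n f *\<^sub>v v) $ i = 0" using v(3) i by simp
        then show "(\<Sum>j<n. f (i,j) * (v $ j)) = 0"
          using i v(1) by (auto simp: mult_mat_vec_def scalar_prod_def row_def atLeast0LessThan)
      qed
      with h have "\<forall>j<n. v $ j = 0" by blast
      then have "v = 0\<^sub>v n" using v(1) by (intro eq_vecI) auto
      with v(2) show False by simp
    qed
  qed
qed

lemma JL2:
  fixes f :: "nat \<times> nat \<Rightarrow> 'k::field"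
  shows "Determinant.det (Matrix.mat n n f) \<noteq> 0 \<longleftrightarrow>
    (\<forall>u. (\<forall>j<n. (\<Sum>i<n. u i * f (i,j)) = 0) \<longrightarrow> (\<forall>i<n. u i = 0))"
proof -
  have A: "Matrix.mat n n f \<in> carrier_mat n n" by simp
  have T: "transpose_mat (Matrix.mat n n f) = Matrix.mat n n (\<lambda>(i,j). f (j,i))"
    by (intro eq_matI) auto
  have "Determinant.det (Matrix.mat n n f) = Determinant.det (Matrix.mat n n (\<lambda>(i,j). f (j,i)))"
    using det_transpose[OF A] T by simp
  also have "\<dots> \<noteq> 0 \<longleftrightarrow> (\<forall>v. (\<forall>i<n. (\<Sum>j<n. (\<lambda>(i,j). f (j,i)) (i,j) * v j) = 0) \<longrightarrow> (\<forall>j<n. v j = 0))"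
    by (rule JL1)
  finally show ?thesis by (simp add: mult.commute)
qed

lemma JL3:
  fixes f :: "nat \<times> nat \<Rightarrow> 'k::field"
  shows "\<exists>g. (\<forall>i<n. \<forall>j<n. (\<Sum>k<n. f (i,k) * g (k,j)) = (if i = j then Determinant.det (Matrix.mat n n f) else 0)) \<and>
             (\<forall>i<n. \<forall>j<n. (\<Sum>k<n. g (i,k) * f (k,j)) = (if i = j then Determinant.det (Matrix.mat n n f) else 0))"
proof -
  define A where "A = Matrix.mat n n f"
  have A: "A \<in> carrier_mat n n" by (simp add: A_def)
  note adj = adj_mat[OF A]
  define g where "g = (\<lambda>(k,j). adj_mat A $$ (k,j))"
  show ?thesis
  proof (intro exI conjI allI impI)
    fix i j assume i: "i < n" and j: "j < n"
    have "(A * adj_mat A) $$ (i,j) = (Determinant.det A \<cdot>\<^sub>m 1\<^sub>m n) $$ (i,j)" using adj(2) by simp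
    then show "(\<Sum>k<n. f (i,k) * g (k,j)) = (if i = j then Determinant.det (Matrix.mat n n f) else 0)"
      using i j adj(1) by (auto simp: A_def g_def scalar_prod_def atLeast0LessThan)
  next
    fix i j assume i: "i < n" and j: "j < n"
    have "(adj_mat A * A) $$ (i,j) = (Determinant.det A \<cdot>\<^sub>m 1\<^sub>m n) $$ (i,j)" using adj(3) by simp
    then show "(\<Sum>k<n. g (i,k) * f (k,j)) = (if i = j then Determinant.det (Matrix.mat n n f) else 0)"
      using i j adj(1) by (auto simp: A_def g_def scalar_prod_def atLeast0LessThan)
  qed
qed

lemma sum_if_eq_L:
  fixes z :: "'l \<Rightarrow> 'k::field"
  assumes "finite L" "a \<in> L"
  shows "(\<Sum>l\<in>L. (if a = l then 1 else 0) * z l) = z a"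
proof -
  have "(\<Sum>l\<in>L. (if a = l then 1 else 0) * z l) = (\<Sum>l\<in>L. if a = l then z l else 0)"
    by (intro sum.cong) auto
  then show ?thesis using assms by (simp add: sum.delta)
qed

lemma sum_delta_mult:
  fixes v :: "'a \<Rightarrow> 'k::comm_ring_1"
  assumes "finite S"
  shows "(\<Sum>j\<in>S. (if k = j then a else 0) * v j) = (if k \<in> S then a * v k else 0)"
proof -
  have "(\<Sum>j\<in>S. (if k = j then a else 0) * v j) = (\<Sum>j\<in>S. if k = j then a * v j else 0)"
    by (intro sum.cong) auto
  then show ?thesis using assms by (simp add: sum.delta)
qed

lemma sum_delta_mult':
  fixes v :: "'a \<Rightarrow> 'k::comm_ring_1"
  assumes "finite S"
  shows "(\<Sum>j\<in>S. v j * (if j = k then a else 0)) = (if k \<in> S then v k * a else 0)"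
proof -
  have "(\<Sum>j\<in>S. v j * (if j = k then a else 0)) = (\<Sum>j\<in>S. if k = j then v j * a else 0)"
    by (intro sum.cong) auto
  then show ?thesis using assms by (simp add: sum.delta)
qed

lemma core_step_A:
  fixes E :: "'w \<Rightarrow> 'l \<Rightarrow> 'k::field"
  assumes Y: "Determinant.det (Matrix.mat r r (\<lambda>(a,b). E (ws b) (ls a))) = \<Delta>" "\<Delta> \<noteq> 0"
    and g1: "\<forall>i<r. \<forall>j<r. (\<Sum>k<r. E (ws k) (ls i) * g (k,j)) = (if i = j then \<Delta> else 0)"
    and g2: "\<forall>i<r. \<forall>j<r. (\<Sum>k<r. g (i,k) * E (ws j) (ls k)) = (if i = j then \<Delta> else 0)"
    and rho: "\<Delta> * E w l' - (\<Sum>b<r. E (ws b) l' * (\<Sum>a<r. g (b,a) * E w (ls a))) \<noteq> 0"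
  shows "Determinant.det (Matrix.mat (Suc r) (Suc r) (\<lambda>(a,b). E ((ws(r:=w)) b) ((ls(r:=l')) a))) \<noteq> 0"
proof -
  let ?t = "\<lambda>k. (\<Sum>a<r. g (k,a) * E w (ls a))"
  show ?thesis
  unfolding JL1
  proof (intro allI impI)
    fix v j
    assume h: "\<forall>i<Suc r. (\<Sum>j<Suc r. (\<lambda>(a,b). E ((ws(r:=w)) b) ((ls(r:=l')) a)) (i,j) * v j) = 0"
      and j: "j < Suc r"
    have eqi: "(\<Sum>j<r. E (ws j) (ls i) * v j) + E w (ls i) * v r = 0" if i: "i < r" for i
    proof -
      have "(\<Sum>j<Suc r. (\<lambda>(a,b). E ((ws(r:=w)) b) ((ls(r:=l')) a)) (i,j) * v j) = 0" using h i less_SucI by blast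
      moreover have "(\<Sum>j<r. (\<lambda>(a,b). E ((ws(r:=w)) b) ((ls(r:=l')) a)) (i,j) * v j) = (\<Sum>j<r. E (ws j) (ls i) * v j)"
        using i by (intro sum.cong) auto
      ultimately show ?thesis using i by simp
    qed
    have eqr: "(\<Sum>j<r. E (ws j) l' * v j) + E w l' * v r = 0"
    proof -
      have "(\<Sum>j<Suc r. (\<lambda>(a,b). E ((ws(r:=w)) b) ((ls(r:=l')) a)) (r,j) * v j) = 0" using h lessI by blast
      moreover have "(\<Sum>j<r. (\<lambda>(a,b). E ((ws(r:=w)) b) ((ls(r:=l')) a)) (r,j) * v j) = (\<Sum>j<r. E (ws j) l' * v j)"
        by (intro sum.cong) auto
      ultimately show ?thesis by simp
    qed
    have vk: "\<Delta> * v k + v r * ?t k = 0" if k: "k < r" for k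
    proof -
      have "0 = (\<Sum>i<r. g (k,i) * ((\<Sum>j<r. E (ws j) (ls i) * v j) + E w (ls i) * v r))"
        using eqi by simp
      also have "\<dots> = (\<Sum>i<r. \<Sum>j<r. g (k,i) * E (ws j) (ls i) * v j) + v r * ?t k"
        by (simp add: distrib_left sum.distrib sum_distrib_left sum_distrib_right mult.assoc mult.left_commute)
          (simp add: mult.commute mult.left_commute)
      also have "(\<Sum>i<r. \<Sum>j<r. g (k,i) * E (ws j) (ls i) * v j) = (\<Sum>j<r. (\<Sum>i<r. g (k,i) * E (ws j) (ls i)) * v j)"
        by (subst sum.swap) (simp add: sum_distrib_right)
      also have "\<dots> = (\<Sum>j<r. (if k = j then \<Delta> else 0) * v j)"
        using g2 k by (intro sum.cong) auto
      also have "\<dots> = \<Delta> * v k" using k by (simp add: sum_delta_mult)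
      finally show ?thesis by simp
    qed
    have "0 = \<Delta> * ((\<Sum>j<r. E (ws j) l' * v j) + E w l' * v r)" using eqr by simp
    also have "\<dots> = (\<Sum>j<r. E (ws j) l' * (\<Delta> * v j)) + \<Delta> * E w l' * v r"
      by (simp add: distrib_left sum_distrib_left mult.left_commute mult.assoc)
    also have "(\<Sum>j<r. E (ws j) l' * (\<Delta> * v j)) = (\<Sum>j<r. - (v r * (E (ws j) l' * ?t j)))"
    proof (intro sum.cong refl)
      fix j assume "j \<in> {..<r}"
      then have "\<Delta> * v j = - (v r * ?t j)" using vk[of j] by (simp add: eq_neg_iff_add_eq_0)
      then show "E (ws j) l' * (\<Delta> * v j) = - (v r * (E (ws j) l' * ?t j))" by (simp only: mult_minus_right mult.left_commute)
    qed
    also have "(\<Sum>j<r. - (v r * (E (ws j) l' * ?t j))) = - (v r * (\<Sum>j<r. E (ws j) l' * ?t j))"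
      by (simp only: sum_negf sum_distrib_left)
    finally have "v r * (\<Delta> * E w l' - (\<Sum>b<r. E (ws b) l' * ?t b)) = 0"
      by (simp add: right_diff_distrib mult.left_commute mult.commute)
    with rho have vr: "v r = 0" by simp
    show "v j = 0"
    proof (cases "j = r")
      case True then show ?thesis using vr by simp
    next
      case False
      then have "j < r" using j by simp
      with vk vr Y(2) show ?thesis by simp
    qed
  qed
qed

lemma det_nz_inj:
  fixes E :: "'w \<Rightarrow> 'l \<Rightarrow> 'k::field"
  assumes "Determinant.det (Matrix.mat r r (\<lambda>(a,b). E (ws b) (ls a))) \<noteq> 0"
  shows "inj_on ls {..<r}"
proof (rule inj_onI, rule ccontr)
  fix a a' assume a: "a \<in> {..<r}" and a': "a' \<in> {..<r}" and eq: "ls a = ls a'" and ne: "a \<noteq> a'"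
  define u where "u = (\<lambda>i. if i = a then 1 else if i = a' then -1 else (0::'k))"
  have "\<forall>j<r. (\<Sum>i<r. u i * (\<lambda>(a,b). E (ws b) (ls a)) (i,j)) = 0"
  proof (intro allI impI)
    fix j assume "j < r"
    have "(\<Sum>i<r. u i * (\<lambda>(a,b). E (ws b) (ls a)) (i,j)) =
          (\<Sum>i<r. (if i = a then E (ws j) (ls a) else 0) + (if i = a' then - E (ws j) (ls a') else 0))"
      using ne by (intro sum.cong) (auto simp: u_def)
    also have "\<dots> = E (ws j) (ls a) - E (ws j) (ls a')"
      using a a' by (simp add: sum.distrib)
    finally show "(\<Sum>i<r. u i * (\<lambda>(a,b). E (ws b) (ls a)) (i,j)) = 0" using eq by simp
  qed
  with assms[unfolded JL2] have "u a = 0" using a by blast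
  then show False by (simp add: u_def)
qed

lemma core:
  fixes E :: "'w \<Rightarrow> 'l \<Rightarrow> 'k::field" and V :: "('l \<Rightarrow> 'k) set"
  assumes finL: "finite L"
    and H: "\<And>c v. (\<forall>w. (\<Sum>l\<in>L. c l * E w l) = 0) \<Longrightarrow> v \<in> V \<Longrightarrow> (\<Sum>l\<in>L. c l * v l) = 0"
  shows "\<exists>r ws ls. ls ` {..<r} \<subseteq> L \<and> Determinant.det (Matrix.mat r r (\<lambda>(a,b). E (ws b) (ls a))) \<noteq> 0 \<and>
    (\<forall>z c v0. (\<forall>b<r. z b \<in> V) \<longrightarrow> (\<forall>b<r. (\<Sum>l\<in>L. c l * z b l) = 0) \<longrightarrow> v0 \<in> V \<longrightarrow>
        (\<Sum>l\<in>L. c l * v0 l) \<noteq> 0 \<longrightarrow> Determinant.det (Matrix.mat r r (\<lambda>(a,b). z b (ls a))) = 0)"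
proof -
  define R where "R = {r. \<exists>ws ls. ls ` {..<r} \<subseteq> L \<and> Determinant.det (Matrix.mat r r (\<lambda>(a,b). E (ws b) (ls a))) \<noteq> 0}"
  have bound: "r \<le> card L" if "r \<in> R" for r
  proof -
    from that obtain ws ls where ls: "ls ` {..<r} \<subseteq> L"
      and d: "Determinant.det (Matrix.mat r r (\<lambda>(a,b). E (ws b) (ls a))) \<noteq> 0"
      unfolding R_def by blast
    have "inj_on ls {..<r}" using det_nz_inj[where E=E and ws=ws and ls=ls and r=r] d by blast
    then have "card {..<r} \<le> card L" using card_inj_on_le[OF _ ls finL] by blast
    then show ?thesis by simp
  qed
  have "0 \<in> R" unfolding R_def by (auto intro!: exI[of _ undefined])
  have finR: "finite R" using bound by (intro finite_subset[of R "{..card L}"]) auto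
  define r where "r = Max R"
  have "r \<in> R" using finR \<open>0 \<in> R\<close> unfolding r_def by (intro Max_in) auto
  have rmax: "\<And>r'. r' \<in> R \<Longrightarrow> r' \<le> r" using finR unfolding r_def by simp
  from \<open>r \<in> R\<close> obtain ws ls where ls: "ls ` {..<r} \<subseteq> L"
      and d: "Determinant.det (Matrix.mat r r (\<lambda>(a,b). E (ws b) (ls a))) \<noteq> 0"
      unfolding R_def by blast
  define \<Delta> where "\<Delta> = Determinant.det (Matrix.mat r r (\<lambda>(a,b). E (ws b) (ls a)))"
  have D0: "\<Delta> \<noteq> 0" using d by (simp add: \<Delta>_def)
  from JL3[of r "\<lambda>(a,b). E (ws b) (ls a)"] obtain g where
    g1: "\<forall>i<r. \<forall>j<r. (\<Sum>k<r. E (ws k) (ls i) * g (k,j)) = (if i = j then \<Delta> else 0)"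
    and g2: "\<forall>i<r. \<forall>j<r. (\<Sum>k<r. g (i,k) * E (ws j) (ls k)) = (if i = j then \<Delta> else 0)"
    unfolding \<Delta>_def by auto
  have lsL: "ls a \<in> L" if "a < r" for a using ls that by auto
  have A1: "\<Delta> * E w l' - (\<Sum>b<r. E (ws b) l' * (\<Sum>a<r. g (b,a) * E w (ls a))) = 0" if l': "l' \<in> L" for w l'
  proof (rule ccontr)
    assume "\<Delta> * E w l' - (\<Sum>b<r. E (ws b) l' * (\<Sum>a<r. g (b,a) * E w (ls a))) \<noteq> 0"
    from core_step_A[OF \<Delta>_def[symmetric] D0 g1 g2 this]
    have "Suc r \<in> R" unfolding R_def using ls l'
      by (intro CollectI exI[of _ "ws(r:=w)"] exI[of _ "ls(r:=l')"]) (auto simp: less_Suc_eq)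
    with rmax show False by fastforce
  qed
  have lin: "(\<Sum>l\<in>L. (\<Delta> * (if l' = l then 1 else 0) - (\<Sum>b<r. E (ws b) l' * (\<Sum>a<r. g (b,a) * (if ls a = l then 1 else 0)))) * z l)
      = \<Delta> * z l' - (\<Sum>b<r. E (ws b) l' * (\<Sum>a<r. g (b,a) * z (ls a)))" if l': "l' \<in> L" for l' and z :: "'l \<Rightarrow> 'k"
  proof -
    have 1: "(\<Sum>l\<in>L. (\<Delta> * (if l' = l then 1 else 0)) * z l) = \<Delta> * z l'"
      using sum_if_eq_L[OF finL l', of z] by (simp add: sum_distrib_left[symmetric] mult.assoc)
    have 2: "(\<Sum>l\<in>L. (\<Sum>b<r. E (ws b) l' * (\<Sum>a<r. g (b,a) * (if ls a = l then 1 else 0))) * z l)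
        = (\<Sum>b<r. E (ws b) l' * (\<Sum>a<r. g (b,a) * z (ls a)))"
    proof -
      have "(\<Sum>l\<in>L. (\<Sum>b<r. E (ws b) l' * (\<Sum>a<r. g (b,a) * (if ls a = l then 1 else 0))) * z l)
          = (\<Sum>l\<in>L. \<Sum>b<r. \<Sum>a<r. E (ws b) l' * g (b,a) * ((if ls a = l then 1 else 0) * z l))"
        by (simp add: sum_distrib_right sum_distrib_left mult.assoc)
      also have "\<dots> = (\<Sum>b<r. \<Sum>a<r. \<Sum>l\<in>L. E (ws b) l' * g (b,a) * ((if ls a = l then 1 else 0) * z l))"
        by (subst sum.swap) (simp add: sum.swap[of _ L])
      also have "\<dots> = (\<Sum>b<r. \<Sum>a<r. E (ws b) l' * g (b,a) * z (ls a))"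
        by (intro sum.cong refl) (simp add: sum_distrib_left[symmetric] sum_if_eq_L[OF finL lsL])
      also have "\<dots> = (\<Sum>b<r. E (ws b) l' * (\<Sum>a<r. g (b,a) * z (ls a)))"
        by (simp add: sum_distrib_left mult.assoc)
      finally show ?thesis .
    qed
    show ?thesis using 1 2 by (simp add: left_diff_distrib sum_subtractf)
  qed
  have A2: "\<Delta> * v l' = (\<Sum>b<r. E (ws b) l' * (\<Sum>a<r. g (b,a) * v (ls a)))" if v: "v \<in> V" and l': "l' \<in> L" for v l'
  proof -
    have "(\<Sum>l\<in>L. (\<Delta> * (if l' = l then 1 else 0) - (\<Sum>b<r. E (ws b) l' * (\<Sum>a<r. g (b,a) * (if ls a = l then 1 else 0)))) * v l) = 0"
      by (rule H[OF _ v]) (use A1 lin l' in simp)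
    then show ?thesis using lin[OF l', of v] by simp
  qed
  show ?thesis
  proof (intro exI conjI allI impI)
    show "ls ` {..<r} \<subseteq> L" by (rule ls)
    show "Determinant.det (Matrix.mat r r (\<lambda>(a,b). E (ws b) (ls a))) \<noteq> 0" by (rule d)
    fix z c v0
    assume zV: "\<forall>b<r. z b \<in> V" and zc: "\<forall>b<r. (\<Sum>l\<in>L. c l * z b l) = 0" and v0: "v0 \<in> V"
      and cv0: "(\<Sum>l\<in>L. c l * v0 l) \<noteq> 0"
    define u where "u j = (\<Sum>l\<in>L. c l * E (ws j) l)" for j
    have rep: "\<Delta> * (\<Sum>l\<in>L. c l * v l) = (\<Sum>j<r. u j * (\<Sum>a<r. g (j,a) * v (ls a)))" if v: "v \<in> V" for v
    proof -
      have "\<Delta> * (\<Sum>l\<in>L. c l * v l) = (\<Sum>l\<in>L. c l * (\<Delta> * v l))"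
        by (simp add: sum_distrib_left mult.left_commute)
      also have "\<dots> = (\<Sum>l\<in>L. c l * (\<Sum>b<r. E (ws b) l * (\<Sum>a<r. g (b,a) * v (ls a))))"
        using A2[OF v] by (intro sum.cong) auto
      also have "\<dots> = (\<Sum>j<r. u j * (\<Sum>a<r. g (j,a) * v (ls a)))"
        unfolding u_def by (simp add: sum_distrib_left sum_distrib_right mult.assoc sum.swap[of _ L])
      finally show ?thesis .
    qed
    have "\<exists>j<r. u j \<noteq> 0"
    proof (rule ccontr)
      assume "\<not> (\<exists>j<r. u j \<noteq> 0)"
      then have "\<Delta> * (\<Sum>l\<in>L. c l * v0 l) = 0" using rep[OF v0] by simp
      with D0 cv0 show False by simp
    qed
    then obtain j0 where j0: "j0 < r" "u j0 \<noteq> 0" by blast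
    define p where "p a = (\<Sum>j<r. u j * g (j,a))" for a
    have kern: "\<forall>b<r. (\<Sum>a<r. p a * (\<lambda>(a,b). z b (ls a)) (a,b)) = 0"
    proof (intro allI impI)
      fix b assume b: "b < r"
      have "(\<Sum>a<r. p a * (\<lambda>(a,b). z b (ls a)) (a,b)) = (\<Sum>j<r. u j * (\<Sum>a<r. g (j,a) * z b (ls a)))"
      proof -
        have "(\<Sum>a<r. p a * (\<lambda>(a,b). z b (ls a)) (a,b)) = (\<Sum>a<r. \<Sum>j<r. u j * (g (j,a) * z b (ls a)))"
          unfolding p_def by (simp add: sum_distrib_right mult.assoc)
        also have "\<dots> = (\<Sum>j<r. \<Sum>a<r. u j * (g (j,a) * z b (ls a)))" by (rule sum.swap)
        finally show ?thesis by (simp add: sum_distrib_left)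
      qed
      also have "\<dots> = \<Delta> * (\<Sum>l\<in>L. c l * z b l)" using rep zV b by simp
      also have "\<dots> = 0" using zc b by simp
      finally show "(\<Sum>a<r. p a * (\<lambda>(a,b). z b (ls a)) (a,b)) = 0" .
    qed
    have pY: "(\<Sum>a<r. p a * E (ws i) (ls a)) = \<Delta> * u i" if i: "i < r" for i
    proof -
      have "(\<Sum>a<r. p a * E (ws i) (ls a)) = (\<Sum>j<r. u j * (\<Sum>a<r. g (j,a) * E (ws i) (ls a)))"
      proof -
        have "(\<Sum>a<r. p a * E (ws i) (ls a)) = (\<Sum>a<r. \<Sum>j<r. u j * (g (j,a) * E (ws i) (ls a)))"
          unfolding p_def by (simp add: sum_distrib_right mult.assoc)
        also have "\<dots> = (\<Sum>j<r. \<Sum>a<r. u j * (g (j,a) * E (ws i) (ls a)))" by (rule sum.swap)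
        finally show ?thesis by (simp add: sum_distrib_left)
      qed
      also have "\<dots> = (\<Sum>j<r. u j * (if j = i then \<Delta> else 0))"
        using g2 i by (intro sum.cong) auto
      also have "\<dots> = u i * \<Delta>" using i by (simp add: sum_delta_mult')
      finally show ?thesis by simp
    qed
    have "\<exists>a<r. p a \<noteq> 0"
    proof (rule ccontr)
      assume "\<not> (\<exists>a<r. p a \<noteq> 0)"
      then have "(\<Sum>a<r. p a * E (ws j0) (ls a)) = 0" by simp
      with pY[OF j0(1)] D0 j0(2) show False by simp
    qed
    then show "Determinant.det (Matrix.mat r r (\<lambda>(a,b). z b (ls a))) = 0"
      using kern JL2[of r "\<lambda>(a,b). z b (ls a)"] by blast
  qed
qed


lemma pf_sum: "finite S \<Longrightarrow> (\<And>s. s \<in> S \<Longrightarrow> f s \<in> polyfun) \<Longrightarrow> (\<lambda>x. \<Sum>s\<in>S. f s x) \<in> polyfun"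
proof (induction S rule: finite_induct)
  case empty then show ?case by (simp add: polyfun.pf_const)
next
  case (insert s S)
  then show ?case using polyfun.pf_add[of "f s" "\<lambda>x. \<Sum>s\<in>S. f s x"] by simp
qed

lemma pf_prod: "finite S \<Longrightarrow> (\<And>s. s \<in> S \<Longrightarrow> f s \<in> polyfun) \<Longrightarrow> (\<lambda>x. \<Prod>s\<in>S. f s x) \<in> polyfun"
proof (induction S rule: finite_induct)
  case empty then show ?case by (simp add: polyfun.pf_const)
next
  case (insert s S)
  then show ?case using polyfun.pf_mult[of "f s" "\<lambda>x. \<Prod>s\<in>S. f s x"] by simp
qed

lemma pf_prod_list: "(\<And>t. (\<lambda>x. g x t) \<in> polyfun) \<Longrightarrow> (\<lambda>x. prod_list (map (g x) l)) \<in> polyfun"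
proof (induction l)
  case Nil then show ?case by (simp add: polyfun.pf_const)
next
  case (Cons t l)
  then show ?case using polyfun.pf_mult[of "\<lambda>x. g x t" "\<lambda>x. prod_list (map (g x) l)"] by simp
qed

lemma pf_power: "p \<in> polyfun \<Longrightarrow> (\<lambda>x. p x ^ n) \<in> polyfun"
proof (induction n)
  case 0 then show ?case by (simp add: polyfun.pf_const)
next
  case (Suc n)
  then show ?case using polyfun.pf_mult[of p "\<lambda>x. p x ^ n"] by simp
qed

lemma pf_if: "f \<in> polyfun \<Longrightarrow> g \<in> polyfun \<Longrightarrow> (\<lambda>z. if P then f z else g z) \<in> polyfun"
  by (cases P) auto

lemma pf_cmult: assumes "p \<in> polyfun" shows "(\<lambda>x. a * p x) \<in> polyfun"
  using polyfun.pf_mult[OF polyfun.pf_const assms] by simp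

lemma pf_mono: "(\<lambda>y. prod_list (map y l)) \<in> polyfun"
  using pf_prod_list[of "\<lambda>y t. y t" l] polyfun.pf_var by auto

lemma polyfun_rep:
  assumes "p \<in> polyfun"
  shows "\<exists>S c. finite S \<and> (\<forall>y. p y = (\<Sum>l\<in>S. c l * prod_list (map y l)))"
  using assms
proof (induction rule: polyfun.induct)
  case (pf_const a)
  show ?case by (intro exI[of _ "{[]}"] exI[of _ "\<lambda>_. a"]) simp
next
  case (pf_var v)
  show ?case by (intro exI[of _ "{[v]}"] exI[of _ "\<lambda>_. 1"]) simp
next
  case (pf_add p q)
  from pf_add.IH obtain S1 c1 S2 c2 where S1: "finite S1" "\<forall>y. p y = (\<Sum>l\<in>S1. c1 l * prod_list (map y l))"
    and S2: "finite S2" "\<forall>y. q y = (\<Sum>l\<in>S2. c2 l * prod_list (map y l))" by blast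
  define c where "c l = (if l \<in> S1 then c1 l else 0) + (if l \<in> S2 then c2 l else 0)" for l
  have "(\<Sum>l\<in>S1 \<union> S2. c l * prod_list (map y l)) = p y + q y" for y
  proof -
    have "(\<Sum>l\<in>S1 \<union> S2. c l * prod_list (map y l)) =
       (\<Sum>l\<in>S1 \<union> S2. if l \<in> S1 then c1 l * prod_list (map y l) else 0) +
       (\<Sum>l\<in>S1 \<union> S2. if l \<in> S2 then c2 l * prod_list (map y l) else 0)"
      unfolding sum.distrib[symmetric] by (intro sum.cong) (auto simp: c_def distrib_right)
    also have "\<dots> = (\<Sum>l\<in>(S1 \<union> S2) \<inter> S1. c1 l * prod_list (map y l)) + (\<Sum>l\<in>(S1 \<union> S2) \<inter> S2. c2 l * prod_list (map y l))"
      using S1 S2 by (subst (1 2) sum.inter_restrict) auto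
    also have "\<dots> = p y + q y" using S1 S2 by (simp add: Int_absorb1)
    finally show ?thesis .
  qed
  then show ?case using S1 S2 by (intro exI[of _ "S1 \<union> S2"] exI[of _ c]) simp
next
  case (pf_mult p q)
  from pf_mult.IH obtain S1 c1 S2 c2 where S1: "finite S1" "\<forall>y. p y = (\<Sum>l\<in>S1. c1 l * prod_list (map y l))"
    and S2: "finite S2" "\<forall>y. q y = (\<Sum>l\<in>S2. c2 l * prod_list (map y l))" by blast
  define h where "h = (\<lambda>(a::'a list, b). a @ b)"
  define T where "T = h ` (S1 \<times> S2)"
  define c where "c l = (\<Sum>ab\<in>{ab \<in> S1 \<times> S2. h ab = l}. c1 (fst ab) * c2 (snd ab))" for l
  have finT: "finite T" using S1 S2 unfolding T_def by simp
  have "(\<Sum>l\<in>T. c l * prod_list (map y l)) = p y * q y" for y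
  proof -
    have "(\<Sum>l\<in>T. c l * prod_list (map y l)) =
        (\<Sum>l\<in>T. \<Sum>ab\<in>{ab \<in> S1 \<times> S2. h ab = l}. c1 (fst ab) * c2 (snd ab) * prod_list (map y (h ab)))"
      unfolding c_def by (simp add: sum_distrib_right)
    also have "\<dots> = (\<Sum>ab\<in>S1 \<times> S2. c1 (fst ab) * c2 (snd ab) * prod_list (map y (h ab)))"
      using S1 S2 finT by (intro sum.group) (auto simp: T_def)
    also have "\<dots> = (\<Sum>a\<in>S1. \<Sum>b\<in>S2. (c1 a * prod_list (map y a)) * (c2 b * prod_list (map y b)))"
      by (simp add: sum.cartesian_product) (intro sum.cong refl, auto simp: h_def mult_ac)
    also have "\<dots> = p y * q y" using S1 S2 by (simp add: sum_product)
    finally show ?thesis .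
  qed
  then show ?case using finT by (intro exI[of _ T] exI[of _ c]) simp
qed

definition adjm :: "'k::field^'n^'n \<Rightarrow> 'k^'n^'n" where
  "adjm A = (\<chi> k j. Determinants.det ((\<chi> i l. if l = k then (if i = j then 1 else 0) else A$i$l) :: 'k^'n^'n))"

lemma inv_props:
  fixes A :: "'k::field^'n^'n"
  assumes "invertible A"
  shows "A ** matrix_inv A = Finite_Cartesian_Product.mat 1 \<and> matrix_inv A ** A = Finite_Cartesian_Product.mat 1"
  using assms unfolding matrix_inv_def invertible_def by (rule someI_ex)

lemma inv_unique:
  fixes A B :: "'k::field^'n^'n"
  assumes "A ** B = Finite_Cartesian_Product.mat 1" "B ** A = Finite_Cartesian_Product.mat 1"
  shows "matrix_inv A = B"
proof -
  have inv: "invertible A" using assms unfolding invertible_def by blast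
  have "matrix_inv A = matrix_inv A ** (A ** B)" using assms by (simp add: matrix_mul_rid)
  also have "\<dots> = (matrix_inv A ** A) ** B" by (simp add: matrix_mul_assoc)
  also have "\<dots> = B" using inv_props[OF inv] by (simp add: matrix_mul_lid)
  finally show ?thesis .
qed

lemma adj_inv:
  fixes A :: "'k::field^'n^'n"
  assumes "invertible A"
  shows "adjm A $ k $ j = Determinants.det A * matrix_inv A $ k $ j"
proof -
  define B where "B = matrix_inv A"
  have AB: "A ** B = Finite_Cartesian_Product.mat 1" using inv_props[OF assms] by (simp add: B_def)
  have d: "Determinants.det A \<noteq> 0" using assms invertible_det_nz by blast
  define b :: "'k^'n" where "b = (\<chi> i. if i = j then 1 else 0)"
  define xx :: "'k^'n" where "xx = (\<chi> k. B $ k $ j)"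
  have "A *v xx = b"
  proof -
    have "(A *v xx) $ i = (A ** B) $ i $ j" for i
      by (simp add: matrix_vector_mult_def matrix_matrix_mult_def xx_def)
    then show ?thesis unfolding Finite_Cartesian_Product.vec_eq_iff using AB by (auto simp: b_def Finite_Cartesian_Product.mat_def)
  qed
  then have "xx = (\<chi> k. Determinants.det (\<chi> i l. if l = k then b$i else A$i$l) / Determinants.det A)"
    using cramer[OF d] by blast
  then have "B $ k $ j = Determinants.det (\<chi> i l. if l = k then b$i else A$i$l) / Determinants.det A"
    by (metis (no_types, lifting) vec_lambda_beta xx_def)
  moreover have "(\<chi> i l. if l = k then b$i else A$i$l) = (\<chi> i l. if l = k then (if i = j then 1 else 0) else A$i$l)"
    unfolding b_def by (rule arg_cong[where f=vec_lambda], rule ext, rule arg_cong[where f=vec_lambda], rule ext) simp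
  ultimately show ?thesis using d by (simp add: adjm_def B_def)
qed

definition letter :: "('e \<Rightarrow> 'k::field^'n^'n) \<Rightarrow> 'e \<times> bool \<Rightarrow> 'k^'n^'n" where
  "letter x a = (if snd a then x (fst a) else matrix_inv (x (fst a)))"

definition aletter :: "('e \<Rightarrow> 'k::field^'n^'n) \<Rightarrow> 'e \<times> bool \<Rightarrow> 'k^'n^'n" where
  "aletter x a = (if snd a then x (fst a) else adjm (x (fst a)))"

definition sletter :: "('e \<Rightarrow> 'k::field^'n^'n) \<Rightarrow> 'e \<times> bool \<Rightarrow> 'k" where
  "sletter x a = (if snd a then 1 else Determinants.det (x (fst a)))"

fun evalw :: "('e \<Rightarrow> 'k::field^'n^'n) \<Rightarrow> ('e \<times> bool) list \<Rightarrow> 'k^'n^'n" where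
  "evalw x [] = Finite_Cartesian_Product.mat 1"
| "evalw x (a # w) = letter x a ** evalw x w"

fun adjw :: "('e \<Rightarrow> 'k::field^'n^'n) \<Rightarrow> ('e \<times> bool) list \<Rightarrow> 'k^'n^'n" where
  "adjw x [] = Finite_Cartesian_Product.mat 1"
| "adjw x (a # w) = aletter x a ** adjw x w"

fun scw :: "('e \<Rightarrow> 'k::field^'n^'n) \<Rightarrow> ('e \<times> bool) list \<Rightarrow> 'k" where
  "scw x [] = 1"
| "scw x (a # w) = sletter x a * scw x w"

lemma aletter_eq:
  assumes "\<forall>i. invertible (x i)"
  shows "aletter x a $ i $ j = sletter x a * letter x a $ i $ j"
  using adj_inv assms by (auto simp: aletter_def sletter_def letter_def)

lemma adjw_eq:
  assumes "\<forall>i. invertible (x i)"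
  shows "adjw x w $ i $ j = scw x w * evalw x w $ i $ j"
proof (induction w arbitrary: i j)
  case Nil then show ?case by simp
next
  case (Cons a w)
  have "adjw x (a # w) $ i $ j = (\<Sum>k\<in>UNIV. aletter x a $ i $ k * adjw x w $ k $ j)"
    by (simp add: matrix_matrix_mult_def)
  also have "\<dots> = (\<Sum>k\<in>UNIV. (sletter x a * scw x w) * (letter x a $ i $ k * evalw x w $ k $ j))"
    using aletter_eq[OF assms] Cons by (intro sum.cong) (auto simp: mult_ac)
  also have "\<dots> = scw x (a # w) * evalw x (a # w) $ i $ j"
    by (simp add: matrix_matrix_mult_def sum_distrib_left)
  finally show ?case .
qed

lemma scw_nz:
  fixes x :: "'e \<Rightarrow> 'k::field^'n^'n"
  assumes "\<forall>i. invertible (x i)"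
  shows "scw x w \<noteq> 0"
  using assms by (induction w) (auto simp: sletter_def invertible_det_nz)

lemma evalw_append: "evalw x (u @ v) = evalw x u ** evalw x v"
  by (induction u) (auto simp: matrix_mul_lid matrix_mul_assoc)

definition flipl :: "'e \<times> bool \<Rightarrow> 'e \<times> bool" where "flipl a = (fst a, \<not> snd a)"

lemma letter_inv:
  assumes "\<forall>i. invertible (x i)"
  shows "letter x a ** letter x (flipl a) = Finite_Cartesian_Product.mat 1 \<and>
         letter x (flipl a) ** letter x a = Finite_Cartesian_Product.mat 1"
  using inv_props[of "x (fst a)"] assms by (auto simp: letter_def flipl_def)

lemma evalw_inv:
  assumes "\<forall>i. invertible (x i)"
  shows "evalw x w ** evalw x (rev (map flipl w)) = Finite_Cartesian_Product.mat 1 \<and>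
         evalw x (rev (map flipl w)) ** evalw x w = Finite_Cartesian_Product.mat 1"
proof (induction w)
  case Nil then show ?case by (simp add: matrix_mul_lid)
next
  case (Cons a w)
  let ?W = "evalw x w" and ?W' = "evalw x (rev (map flipl w))" and ?P = "letter x a" and ?P' = "letter x (flipl a)"
  have e: "evalw x (rev (map flipl (a # w))) = ?W' ** (?P' ** Finite_Cartesian_Product.mat 1)"
    by (simp add: evalw_append)
  have "?P ** ?W ** (?W' ** ?P') = ?P ** (?W ** ?W') ** ?P'" by (simp add: matrix_mul_assoc)
  also have "\<dots> = Finite_Cartesian_Product.mat 1" using Cons letter_inv[OF assms, of a] by (simp add: matrix_mul_rid)
  finally have 1: "?P ** ?W ** (?W' ** ?P') = Finite_Cartesian_Product.mat 1" .
  have "?W' ** ?P' ** (?P ** ?W) = ?W' ** (?P' ** ?P) ** ?W" by (simp add: matrix_mul_assoc)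
  also have "\<dots> = Finite_Cartesian_Product.mat 1" using Cons letter_inv[OF assms, of a] by (simp add: matrix_mul_rid)
  finally have 2: "?W' ** ?P' ** (?P ** ?W) = Finite_Cartesian_Product.mat 1" .
  show ?case using 1 2 unfolding e by (simp add: matrix_mul_rid matrix_mul_assoc)
qed

lemma gen_eq:
  fixes x :: "'e \<Rightarrow> 'k::field^'n^'n"
  assumes "\<forall>i. invertible (x i)"
  shows "gen_subgroup (range x) = range (evalw x)"
proof
  show "gen_subgroup (range x) \<subseteq> range (evalw x)"
  proof
    fix g assume "g \<in> gen_subgroup (range x)"
    then show "g \<in> range (evalw x)"
    proof (induction rule: gen_subgroup.induct)
      case gs_one then show ?case by (metis evalw.simps(1) rangeI)
    next
      case (gs_gen s)
      then obtain i where "s = x i" by auto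
      then have "s = evalw x [(i, True)]" by (simp add: letter_def matrix_mul_rid)
      then show ?case by blast
    next
      case (gs_mult a b)
      then obtain u v where "a = evalw x u" "b = evalw x v" by auto
      then have "a ** b = evalw x (u @ v)" by (simp add: evalw_append)
      then show ?case by blast
    next
      case (gs_inv a)
      then obtain u where u: "a = evalw x u" by auto
      have "matrix_inv a = evalw x (rev (map flipl u))" using u evalw_inv[OF assms, of u] inv_unique by blast
      then show ?case by blast
    qed
  qed
next
  show "range (evalw x) \<subseteq> gen_subgroup (range x)"
  proof
    fix g assume "g \<in> range (evalw x)"
    then obtain w where g: "g = evalw x w" by auto
    have "evalw x w \<in> gen_subgroup (range x)"
    proof (induction w)
      case Nil then show ?case by (simp add: gen_subgroup.gs_one)
    next
      case (Cons a w)
      have "letter x a \<in> gen_subgroup (range x)"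
        by (auto simp: letter_def intro: gen_subgroup.gs_gen gen_subgroup.gs_inv)
      then show ?case using Cons by (simp add: gen_subgroup.gs_mult)
    qed
    then show "g \<in> gen_subgroup (range x)" using g by simp
  qed
qed

lemma evalw_in_G:
  assumes "mat_subgroup G" "\<forall>i. x i \<in> G"
  shows "evalw x w \<in> G"
  using assms by (induction w) (auto simp: mat_subgroup_def letter_def)

definition xof :: "('e \<times> 'n \<times> 'n \<Rightarrow> 'k) \<Rightarrow> 'e \<Rightarrow> 'k^'n^'n" where
  "xof z = (\<lambda>e. \<chi> i j. z (e,i,j))"

lemma xof_tup: "xof (tup_coords x) = x"
  by (simp add: xof_def tup_coords_def Finite_Cartesian_Product.vec_eq_iff)

definition mpoly :: "(('c \<Rightarrow> 'k::comm_ring_1) \<Rightarrow> 'k^'n^'n) \<Rightarrow> bool" where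
  "mpoly M \<longleftrightarrow> (\<forall>i j. (\<lambda>z. M z $ i $ j) \<in> polyfun)"

lemma mpoly_one: "mpoly (\<lambda>z. Finite_Cartesian_Product.mat 1)"
  by (simp add: mpoly_def Finite_Cartesian_Product.mat_def polyfun.pf_const)

lemma mpoly_mult: "mpoly M \<Longrightarrow> mpoly N \<Longrightarrow> mpoly (\<lambda>z. M z ** N z)"
  unfolding mpoly_def matrix_matrix_mult_def
  by (auto intro!: pf_sum polyfun.pf_mult)

lemma det_poly:
  assumes "mpoly M"
  shows "(\<lambda>z. Determinants.det (M z)) \<in> polyfun"
  unfolding Determinants.det_def
  using assms unfolding mpoly_def
  by (intro pf_sum pf_cmult pf_prod) (auto simp: finite_permutations)

lemma adjm_poly:
  fixes M :: "('c \<Rightarrow> 'k::field) \<Rightarrow> 'k^'n^'n"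
  assumes "mpoly M"
  shows "mpoly (\<lambda>z. adjm (M z))"
proof -
  have "(\<lambda>z. adjm (M z) $ k $ j) \<in> polyfun" for k j
  proof -
    have "mpoly (\<lambda>z. (\<chi> i l. if l = k then (if i = j then 1 else 0) else M z $i$l) :: 'k^'n^'n)"
      using assms unfolding mpoly_def by (auto intro!: pf_if simp: polyfun.pf_const)
    from det_poly[OF this] show ?thesis by (simp add: adjm_def)
  qed
  then show ?thesis by (simp add: mpoly_def)
qed

lemma mpoly_var: "mpoly (\<lambda>z. xof z e)"
  by (simp add: mpoly_def xof_def polyfun.pf_var)

lemma scw_poly: "(\<lambda>z. scw (xof z) w) \<in> polyfun"
proof (induction w)
  case Nil then show ?case by (simp add: polyfun.pf_const)
next
  case (Cons a w)
  have "(\<lambda>z. sletter (xof z) a) \<in> polyfun"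
    using det_poly[OF mpoly_var] by (cases "snd a") (auto simp: sletter_def polyfun.pf_const)
  then show ?case using Cons polyfun.pf_mult by fastforce
qed

lemma adjw_poly: "mpoly (\<lambda>z. adjw (xof z) w)"
proof (induction w)
  case Nil then show ?case by (simp add: mpoly_one)
next
  case (Cons a w)
  have "mpoly (\<lambda>z. aletter (xof z) a)"
    using adjm_poly[OF mpoly_var] mpoly_var by (cases "snd a") (auto simp: aletter_def)
  then show ?case using Cons mpoly_mult by fastforce
qed

lemma jdet_poly:
  assumes "\<And>a b. (\<lambda>z. f z (a,b)) \<in> polyfun"
  shows "(\<lambda>z. Determinant.det (Matrix.mat r r (f z))) \<in> polyfun"
proof -
  have eq: "Determinant.det (Matrix.mat r r (f z)) =
     (\<Sum>p\<in>{p. p permutes {0..<r}}. of_int (sign p) * (\<Prod>i\<in>{0..<r}. f z (i, p i)))" for z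
  proof -
    have "Determinant.det (Matrix.mat r r (f z)) =
       (\<Sum>p\<in>{p. p permutes {0..<r}}. of_int (sign p) * (\<Prod>i\<in>{0..<r}. Matrix.mat r r (f z) $$ (i, p i)))"
      by (rule det_def') simp
    also have "\<dots> = (\<Sum>p\<in>{p. p permutes {0..<r}}. of_int (sign p) * (\<Prod>i\<in>{0..<r}. f z (i, p i)))"
      by (intro sum.cong refl arg_cong2[where f="(*)"] prod.cong)
         (auto dest: permutes_in_image)
    finally show ?thesis .
  qed
  show ?thesis unfolding eq
    using assms by (intro pf_sum pf_cmult pf_prod) (auto simp: finite_permutations)
qed


lemma sum_restrict_coef:
  fixes c f :: "'a \<Rightarrow> 'k::comm_ring_1"
  assumes "finite T" "S0 \<subseteq> T"
  shows "(\<Sum>l\<in>T. (if l \<in> S0 then c l else 0) * f l) = (\<Sum>l\<in>S0. c l * f l)"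
proof -
  have "(\<Sum>l\<in>T. (if l \<in> S0 then c l else 0) * f l) = (\<Sum>l\<in>T. if l \<in> S0 then c l * f l else 0)"
    by (intro sum.cong) auto
  also have "\<dots> = (\<Sum>l\<in>T \<inter> S0. c l * f l)" using assms by (simp add: sum.inter_restrict)
  also have "T \<inter> S0 = S0" using assms by blast
  finally show ?thesis .
qed

lemma prod_adjw:
  fixes x :: "'e \<Rightarrow> 'k::field^'n^'n"
  assumes "\<forall>i. invertible (x i)"
  shows "prod_list (map (mat_coords (adjw x w)) l) = scw x w ^ length l * prod_list (map (mat_coords (evalw x w)) l)"
  by (induction l) (auto simp: mat_coords_def adjw_eq[OF assms] mult_ac)

theorem lemma2p7:
  fixes G :: "('k::field^'n^'n) set"
    and C :: "'e::finite \<Rightarrow> ('k^'n^'n) set"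
    and \<Omega> :: "('e \<Rightarrow> 'k^'n^'n) set"
  assumes "alg_closed_field TYPE('k)"
    and "uncountable (UNIV :: 'k set)"
    and "simple_algebraic_group G"
    and "\<forall>i. \<exists>c\<in>G. \<not> central_in G c \<and> C i = conj_class G c"
    and "\<Omega> = {x. \<forall>i. x i \<in> C i}"
    and "\<exists>x\<in>\<Omega>. zdense_in mat_coords G (gen_subgroup (range x))"
  shows "\<exists>F :: nat \<Rightarrow> ('e \<Rightarrow> 'k^'n^'n) set.
           (\<forall>m. zclosed_in tup_coords \<Omega> (F m) \<and> F m \<noteq> \<Omega>) \<and>
           \<Omega> - (\<Union>m. F m) \<subseteq> {x\<in>\<Omega>. zdense_in mat_coords G (gen_subgroup (range x))}"
proof -
  have msG: "mat_subgroup G" using assms(3) by (simp add: simple_algebraic_group_def algebraic_group_def)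
  have Ginv: "invertible A" if "A \<in> G" for A using msG that by (auto simp: mat_subgroup_def GLn_def)
  have OmG: "x i \<in> G" if "x \<in> \<Omega>" for x i
  proof -
    from assms(4) obtain c where c: "c \<in> G" "C i = conj_class G c" by blast
    have "x i \<in> C i" using that assms(5) by blast
    then obtain g where g: "g \<in> G" "x i = g ** c ** matrix_inv g" using c by (auto simp: conj_class_def)
    then show ?thesis using msG c by (simp add: mat_subgroup_def)
  qed
  have Ominv: "\<forall>i. invertible (x i)" if "x \<in> \<Omega>" for x using OmG[OF that] Ginv by blast
  have OmGam: "gen_subgroup (range x) = range (evalw x)" "range (evalw x) \<subseteq> G" if "x \<in> \<Omega>" for x
    using gen_eq[OF Ominv[OF that]] evalw_in_G[OF msG] OmG[OF that] by auto
  from assms(6) obtain x0 where x0: "x0 \<in> \<Omega>" "zdense_in mat_coords G (gen_subgroup (range x0))" by blast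
  define e :: "'k^'n^'n \<Rightarrow> ('n\<times>'n) list \<Rightarrow> 'k" where "e A l = prod_list (map (mat_coords A) l)" for A l
  define Lset :: "nat \<Rightarrow> ('n\<times>'n) list set" where "Lset d = {l. length l \<le> d}" for d
  have finL: "finite (Lset d)" for d
  proof -
    have "Lset d = {xs. set xs \<subseteq> UNIV \<and> length xs \<le> d}" by (simp add: Lset_def)
    then show ?thesis using finite_lists_length_le[of "UNIV :: ('n\<times>'n) set" d] by simp
  qed
  define V where "V d = {v. \<exists>s g. g \<in> G \<and> (\<forall>l\<in>Lset d. v l = s * e g l)}" for d
  define Et :: "nat \<Rightarrow> ('e \<Rightarrow> 'k^'n^'n) \<Rightarrow> ('e\<times>bool) list \<Rightarrow> ('n\<times>'n) list \<Rightarrow> 'k"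
    where "Et d x w l = scw x w ^ (d - length l) * prod_list (map (mat_coords (adjw x w)) l)" for d x w l
  have Et_eq: "Et d x w l = scw x w ^ d * e (evalw x w) l" if "x \<in> \<Omega>" "l \<in> Lset d" for d x w l
  proof -
    have "Et d x w l = scw x w ^ (d - length l) * scw x w ^ length l * e (evalw x w) l"
      unfolding Et_def e_def prod_adjw[OF Ominv[OF that(1)]] by (simp add: mult.assoc)
    also have "scw x w ^ (d - length l) * scw x w ^ length l = scw x w ^ d"
      using that(2) by (simp add: Lset_def power_add[symmetric])
    finally show ?thesis .
  qed
  have H: "(\<Sum>l\<in>Lset d. c l * v l) = 0" if hc: "\<forall>w. (\<Sum>l\<in>Lset d. c l * Et d x0 w l) = 0" and v: "v \<in> V d" for d c v
  proof -
    define q where "q y = (\<Sum>l\<in>Lset d. c l * prod_list (map y l))" for y :: "'n \<times> 'n \<Rightarrow> 'k"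
    have qpoly: "q \<in> polyfun" unfolding q_def
      by (rule pf_sum[OF finL]) (rule pf_cmult[OF pf_mono])
    have qw: "q (mat_coords (evalw x0 w)) = 0" for w
    proof -
      have "scw x0 w ^ d * q (mat_coords (evalw x0 w)) = (\<Sum>l\<in>Lset d. c l * Et d x0 w l)"
        unfolding q_def sum_distrib_left using Et_eq[OF x0(1)] by (intro sum.cong) (auto simp: e_def mult_ac)
      also have "\<dots> = 0" using hc by blast
      finally show ?thesis using scw_nz[OF Ominv[OF x0(1)], of w] by simp
    qed
    define W where "W = {g \<in> G. q (mat_coords g) = 0}"
    have "zclosed_in mat_coords G W"
      unfolding zclosed_in_def zariski_closed_def W_def
      by (intro conjI exI[of _ "{y. q y = 0}"] exI[of _ "{q}"]) (auto simp: qpoly)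
    moreover have "gen_subgroup (range x0) \<subseteq> W" using OmGam[OF x0(1)] qw by (auto simp: W_def)
    ultimately have WG: "W = G" using x0(2) unfolding zdense_in_def by blast
    from v obtain s g where g: "g \<in> G" "\<forall>l\<in>Lset d. v l = s * e g l" by (auto simp: V_def)
    have "(\<Sum>l\<in>Lset d. c l * v l) = s * q (mat_coords g)"
      unfolding q_def sum_distrib_left using g(2) by (intro sum.cong) (auto simp: e_def mult_ac)
    also have "q (mat_coords g) = 0" using WG g(1) by (auto simp: W_def)
    finally show ?thesis by simp
  qed
  have "\<forall>d. \<exists>t. snd (snd t) ` {..<fst t} \<subseteq> Lset d \<and>
      Determinant.det (Matrix.mat (fst t) (fst t) (\<lambda>(a,b). Et d x0 (fst (snd t) b) (snd (snd t) a))) \<noteq> 0 \<and>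
      (\<forall>z c v0. (\<forall>b<fst t. z b \<in> V d) \<longrightarrow> (\<forall>b<fst t. (\<Sum>l\<in>Lset d. c l * z b l) = 0) \<longrightarrow> v0 \<in> V d \<longrightarrow>
        (\<Sum>l\<in>Lset d. c l * v0 l) \<noteq> 0 \<longrightarrow> Determinant.det (Matrix.mat (fst t) (fst t) (\<lambda>(a,b). z b (snd (snd t) a))) = 0)"
    (is "\<forall>d. ?Q d")
  proof
    fix d
    from core[of "Lset d" "Et d x0" "V d", OF finL H]
    obtain r ws ls where "ls ` {..<r} \<subseteq> Lset d \<and>
      Determinant.det (Matrix.mat r r (\<lambda>(a,b). Et d x0 (ws b) (ls a))) \<noteq> 0 \<and>
      (\<forall>z c v0. (\<forall>b<r. z b \<in> V d) \<longrightarrow> (\<forall>b<r. (\<Sum>l\<in>Lset d. c l * z b l) = 0) \<longrightarrow> v0 \<in> V d \<longrightarrow>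
        (\<Sum>l\<in>Lset d. c l * v0 l) \<noteq> 0 \<longrightarrow> Determinant.det (Matrix.mat r r (\<lambda>(a,b). z b (ls a))) = 0)"
      by blast
    then show "?Q d" by (intro exI[of _ "(r, ws, ls)"]) simp
  qed
  from choice[OF this] obtain T where T: "\<forall>d. snd (snd (T d)) ` {..<fst (T d)} \<subseteq> Lset d \<and>
      Determinant.det (Matrix.mat (fst (T d)) (fst (T d)) (\<lambda>(a,b). Et d x0 (fst (snd (T d)) b) (snd (snd (T d)) a))) \<noteq> 0 \<and>
      (\<forall>z c v0. (\<forall>b<fst (T d). z b \<in> V d) \<longrightarrow> (\<forall>b<fst (T d). (\<Sum>l\<in>Lset d. c l * z b l) = 0) \<longrightarrow> v0 \<in> V d \<longrightarrow>
        (\<Sum>l\<in>Lset d. c l * v0 l) \<noteq> 0 \<longrightarrow> Determinant.det (Matrix.mat (fst (T d)) (fst (T d)) (\<lambda>(a,b). z b (snd (snd (T d)) a))) = 0)"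
    by (rule exE)
  define R where "R d = fst (T d)" for d
  define WS where "WS d = fst (snd (T d))" for d
  define LS where "LS d = snd (snd (T d))" for d
  define Dd where "Dd d x = Determinant.det (Matrix.mat (R d) (R d) (\<lambda>(a,b). Et d x (WS d b) (LS d a)))" for d x
  define F where "F d = {x \<in> \<Omega>. Dd d x = 0}" for d
  have Dpoly: "(\<lambda>z. Dd d (xof z)) \<in> polyfun" for d
    unfolding Dd_def
  proof (rule jdet_poly)
    fix a b
    show "(\<lambda>z. case (a, b) of (a, b) \<Rightarrow> Et d (xof z) (WS d b) (LS d a)) \<in> polyfun"
      unfolding Et_def case_prod_conv
    proof (rule polyfun.pf_mult)
      show "(\<lambda>z. scw (xof z) (WS d b) ^ (d - length (LS d a))) \<in> polyfun" by (rule pf_power[OF scw_poly])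
      show "(\<lambda>z. prod_list (map (mat_coords (adjw (xof z) (WS d b))) (LS d a))) \<in> polyfun"
        by (rule pf_prod_list) (use adjw_poly in \<open>auto simp: mpoly_def mat_coords_def split: prod.splits\<close>)
    qed
  qed
  show ?thesis
  proof (intro exI[of _ F] conjI allI)
    fix m
    show "zclosed_in tup_coords \<Omega> (F m)"
      unfolding zclosed_in_def zariski_closed_def
      by (intro conjI exI[of _ "{z. Dd m (xof z) = 0}"] exI[of _ "{\<lambda>z. Dd m (xof z)}"])
         (auto simp: F_def Dpoly xof_tup)
    have "Dd m x0 \<noteq> 0" using spec[OF T, of m] by (simp add: Dd_def R_def WS_def LS_def)
    then show "F m \<noteq> \<Omega>" using x0(1) by (auto simp: F_def)
  next
    show "\<Omega> - (\<Union>m. F m) \<subseteq> {x\<in>\<Omega>. zdense_in mat_coords G (gen_subgroup (range x))}"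
    proof
      fix x assume xF: "x \<in> \<Omega> - (\<Union>m. F m)"
      then have x: "x \<in> \<Omega>" by blast
      have "zdense_in mat_coords G (gen_subgroup (range x))"
      proof (rule ccontr)
        assume nd: "\<not> zdense_in mat_coords G (gen_subgroup (range x))"
        have sub: "gen_subgroup (range x) \<subseteq> G" using OmGam[OF x] by simp
        with nd obtain W where W: "zclosed_in mat_coords G W" "gen_subgroup (range x) \<subseteq> W" "W \<noteq> G"
          unfolding zdense_in_def by blast
        from W(1) obtain S P where SP: "W \<subseteq> G" "W = {y \<in> G. mat_coords y \<in> S}" "P \<subseteq> polyfun"
          "S = {y. \<forall>p\<in>P. p y = 0}" unfolding zclosed_in_def zariski_closed_def by blast
        from W(3) SP obtain g0 p where g0: "g0 \<in> G" "p \<in> P" "p (mat_coords g0) \<noteq> 0" by blast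
        have pw: "p (mat_coords (evalw x w)) = 0" for w
        proof -
          have "evalw x w \<in> W" using W(2) OmGam[OF x] by blast
          then show ?thesis using SP g0(2) by blast
        qed
        from polyfun_rep[of p] SP(3) g0(2) obtain S0 c where S0: "finite S0"
          "\<forall>y. p y = (\<Sum>l\<in>S0. c l * prod_list (map y l))" by blast
        define d where "d = Max (insert 0 (length ` S0))"
        have S0L: "S0 \<subseteq> Lset d" using S0(1) by (auto simp: Lset_def d_def)
        define c' where "c' l = (if l \<in> S0 then c l else 0)" for l
        have pe: "p (mat_coords A) = (\<Sum>l\<in>Lset d. c' l * e A l)" for A
          unfolding c'_def sum_restrict_coef[OF finL S0L] using S0(2) by (simp add: e_def)
        let ?z = "\<lambda>b. Et d x (WS d b)"
        have zV: "\<forall>b<R d. ?z b \<in> V d"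
          unfolding V_def using Et_eq[OF x] OmGam(2)[OF x] by blast
        have zc: "\<forall>b<R d. (\<Sum>l\<in>Lset d. c' l * ?z b l) = 0"
        proof (intro allI impI)
          fix b
          have "(\<Sum>l\<in>Lset d. c' l * ?z b l) = scw x (WS d b) ^ d * p (mat_coords (evalw x (WS d b)))"
            unfolding pe sum_distrib_left using Et_eq[OF x] by (intro sum.cong) (auto simp: mult_ac)
          then show "(\<Sum>l\<in>Lset d. c' l * ?z b l) = 0" using pw by simp
        qed
        have v0: "e g0 \<in> V d" unfolding V_def using g0(1) by (intro CollectI exI[of _ 1] exI[of _ g0]) simp
        have cv0: "(\<Sum>l\<in>Lset d. c' l * e g0 l) \<noteq> 0" using pe[of g0] g0(3) by simp
        note Td = conjunct2[OF conjunct2[OF spec[OF T, of d]]]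
        have "Determinant.det (Matrix.mat (fst (T d)) (fst (T d)) (\<lambda>(a,b). ?z b (snd (snd (T d)) a))) = 0"
          by (rule Td[rule_format, of ?z c' "e g0", OF zV[unfolded R_def, rule_format] zc[unfolded R_def, rule_format] v0 cv0])
        then have "Dd d x = 0" unfolding Dd_def R_def WS_def LS_def .
        then have "x \<in> F d" using x by (simp add: F_def)
        then show False using xF by blast
      qed
      then show "x \<in> {x\<in>\<Omega>. zdense_in mat_coords G (gen_subgroup (range x))}" using x by blast
    qed
  qed
qed


end
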